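(* Let $f\in M_k(\Gamma)$ and $g\in M_l(\Gamma)$ be nonzero cusp forms and $r,s\ge0$, such that $\delta_k^{(r)}(f)$ and $\delta_l^{(s)}(g)$ are both eigenforms. Then $\delta_k^{(r)}(f)\,\delta_l^{(s)}(g)$ is not an eigenform.
   Context: $\Gamma=SL_2(\mathbb Z)$; $M_k(\Gamma)$ is the space of holomorphic modular forms of even weight $k$. The Maass–Shimura operator is $\delta_k(F)(z)=\frac{1}{2\pi i}\left(\frac{k}{2i\,\mathrm{Im}(z)}F(z)+\frac{\partial F}{\partial z}(z)\right)$, $\delta_k^{(r)}=\delta_{k+2r-2}\circ\cdots\circ\delta_k$, $\delta_k^{(0)}=\mathrm{id}$. The Hecke operator in weight $k$ is $(T_nF)(z)=n^{k-1}\sum_{d\mid n}d^{-k}\sum_{b=0}^{d-1}F\left(\frac{nz+bd}{d^2}\right)$, and an eigenform is a nonzero (nearly holomorphic) form that is an eigenvector of every $T_n$, $n\ge1$. *)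

theory Defs
  imports "HOL-Analysis.Analysis"
begin

definition upper_half :: "complex set" where
  "upper_half = {z. Im z > 0}"

text \<open>Holomorphic modular forms of weight k for SL2(Z): holomorphic on the upper half plane,
  weight-k invariant under every matrix (a b; c d) in SL2(Z), with a q-expansion
  sum over n \<ge> 0 of a_n q^n, q = exp(2 pi i z) (holomorphy at the cusp).\<close>
definition q_expansion :: "(nat \<Rightarrow> complex) \<Rightarrow> (complex \<Rightarrow> complex) \<Rightarrow> bool" where
  "q_expansion a f \<longleftrightarrow>
     (\<forall>z\<in>upper_half. (\<lambda>n. a n * exp (2 * complex_of_real pi * \<i> * of_nat n * z)) sums f z)"

definition modular_form :: "int \<Rightarrow> (complex \<Rightarrow> complex) \<Rightarrow> bool" where
  "modular_form k f \<longleftrightarrow>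
     f holomorphic_on upper_half \<and>
     (\<forall>a b c d :: int. a * d - b * c = 1 \<longrightarrow>
        (\<forall>z\<in>upper_half. f ((of_int a * z + of_int b) / (of_int c * z + of_int d))
                          = (of_int c * z + of_int d) powi k * f z)) \<and>
     (\<exists>a. q_expansion a f)"

definition cusp_form :: "int \<Rightarrow> (complex \<Rightarrow> complex) \<Rightarrow> bool" where
  "cusp_form k f \<longleftrightarrow> modular_form k f \<and> (\<exists>a. q_expansion a f \<and> a 0 = 0)"

definition wirtinger_dz :: "(complex \<Rightarrow> complex) \<Rightarrow> complex \<Rightarrow> complex" where
  "wirtinger_dz F z =
     (vector_derivative (\<lambda>t::real. F (z + of_real t)) (at 0)
      - \<i> * vector_derivative (\<lambda>t::real. F (z + \<i> * of_real t)) (at 0)) / 2"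

definition maass_shimura :: "int \<Rightarrow> (complex \<Rightarrow> complex) \<Rightarrow> complex \<Rightarrow> complex" where
  "maass_shimura k F z =
     (1 / (2 * complex_of_real pi * \<i>)) *
       (of_int k / (2 * \<i> * complex_of_real (Im z)) * F z + wirtinger_dz F z)"

fun maass_shimura_iter :: "int \<Rightarrow> nat \<Rightarrow> (complex \<Rightarrow> complex) \<Rightarrow> complex \<Rightarrow> complex" where
  "maass_shimura_iter k 0 F = F"
| "maass_shimura_iter k (Suc r) F = maass_shimura (k + 2 * int r) (maass_shimura_iter k r F)"

definition hecke :: "int \<Rightarrow> nat \<Rightarrow> (complex \<Rightarrow> complex) \<Rightarrow> complex \<Rightarrow> complex" where
  "hecke k n F z =
     of_nat n powi (k - 1) *
       (\<Sum>d | d dvd n. of_nat d powi (- k) *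
          (\<Sum>b<d. F ((of_nat n * z + of_nat b * of_nat d) / (of_nat d)\<^sup>2)))"

definition eigenform :: "int \<Rightarrow> (complex \<Rightarrow> complex) \<Rightarrow> bool" where
  "eigenform k F \<longleftrightarrow>
     (\<exists>z\<in>upper_half. F z \<noteq> 0) \<and>
     (\<forall>n\<ge>1. \<exists>c::complex. \<forall>z\<in>upper_half. hecke k n F z = c * F z)"

end

theory Submission
  imports Defs
begin

definition qq :: "complex \<Rightarrow> complex" where
  "qq z = exp (2 * complex_of_real pi * \<i> * z)"

lemma norm_qq: "norm (qq z) = exp (- 2 * pi * Im z)"
  by (simp add: qq_def)

lemma norm_qq_lt1: "z \<in> upper_half \<Longrightarrow> norm (qq z) < 1"
  by (simp add: norm_qq upper_half_def)

lemma qq_lt_radius: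
  assumes "z \<in> upper_half" "1 \<le> fps_conv_radius S" shows "ereal (norm (qq z)) < fps_conv_radius S"
proof -
  have "ereal (norm (qq z)) < 1" using norm_qq_lt1[OF assms(1)] by simp
  thus ?thesis using assms(2) by (rule less_le_trans)
qed

definition NH :: "(complex \<Rightarrow> complex) \<Rightarrow> bool" where
  "NH F \<longleftrightarrow> (\<exists>J S. (\<forall>j. 1 \<le> fps_conv_radius (S j) \<and> fps_nth (S j) 0 = 0) \<and>
     (\<forall>z\<in>upper_half. F z = (\<Sum>j<J. (complex_of_real (1 / Im z)) ^ j * eval_fps (S j) (qq z))))"

lemma cusp_NH:
  assumes "cusp_form k f" shows "NH f"
proof -
  from assms obtain a where qa: "q_expansion a f" and a0: "a 0 = 0"
    unfolding cusp_form_def by blast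
  define S where "S = Abs_fps a"
  have ev: "f z = eval_fps S (qq z)" if z: "z \<in> upper_half" for z
  proof -
    have "(\<lambda>n. a n * exp (2 * complex_of_real pi * \<i> * of_nat n * z)) sums f z"
      using qa z unfolding q_expansion_def by blast
    moreover have "exp (2 * complex_of_real pi * \<i> * of_nat n * z) = qq z ^ n" for n
      unfolding qq_def by (subst exp_of_nat_mult[symmetric]) (simp add: algebra_simps)
    ultimately have "(\<lambda>n. a n * qq z ^ n) sums f z" by simp
    thus ?thesis by (simp add: eval_fps_def S_def sums_iff)
  qed
  have rad: "1 \<le> fps_conv_radius S"
    unfolding fps_conv_radius_def
  proof (rule conv_radius_geI_ex')
    fix r :: real assume r: "0 < r" "ereal r < 1"
    define z where "z = \<i> * complex_of_real (- ln r / (2 * pi))"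
    have r1: "r < 1" using r by simp
    have zH: "z \<in> upper_half" using r r1 by (simp add: z_def upper_half_def field_simps)
    have "qq z = complex_of_real r"
    proof -
      have "2 * complex_of_real pi * \<i> * z = complex_of_real (ln r)"
        by (simp add: z_def field_simps)
      thus ?thesis using r by (simp add: qq_def exp_of_real)
    qed
    moreover have "(\<lambda>n. a n * exp (2 * complex_of_real pi * \<i> * of_nat n * z)) sums f z"
      using qa zH unfolding q_expansion_def by blast
    moreover have "exp (2 * complex_of_real pi * \<i> * of_nat n * z) = qq z ^ n" for n
      unfolding qq_def by (subst exp_of_nat_mult[symmetric]) (simp add: algebra_simps)
    ultimately show "summable (\<lambda>n. fps_nth S n * complex_of_real r ^ n)"
      by (auto simp: S_def sums_iff)
  qed
  show ?thesis unfolding NH_def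
    by (rule exI[of _ 1], rule exI[of _ "\<lambda>_. S"]) (use rad a0 ev in \<open>auto simp: S_def\<close>)
qed

definition TT :: "nat \<Rightarrow> complex fps \<Rightarrow> complex \<Rightarrow> complex" where
  "TT j S w = (complex_of_real (1 / Im w)) ^ j * eval_fps S (qq w)"

lemma DERIV_qq: "(qq has_field_derivative (2 * complex_of_real pi * \<i> * qq z)) (at z)"
  unfolding qq_def by (auto intro!: derivative_eq_intros)

lemma DERIV_H:
  assumes "z \<in> upper_half" "1 \<le> fps_conv_radius S"
  shows "((\<lambda>w. eval_fps S (qq w)) has_field_derivative
           (eval_fps (fps_deriv S) (qq z) * (2 * complex_of_real pi * \<i> * qq z))) (at z)"
  using DERIV_chain2[OF has_field_derivative_eval_fps[OF qq_lt_radius[OF assms]] DERIV_qq] .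

lemma TT_real_dir:
  assumes z: "z \<in> upper_half" and R: "1 \<le> fps_conv_radius S"
  shows "((\<lambda>t. TT j S (z + complex_of_real t)) has_vector_derivative
     ((complex_of_real (1 / Im z)) ^ j * (eval_fps (fps_deriv S) (qq z) * (2 * complex_of_real pi * \<i> * qq z)))) (at 0)"
proof -
  define c where "c = (complex_of_real (1 / Im z)) ^ j"
  have e: "(\<lambda>t. TT j S (z + complex_of_real t)) = (\<lambda>t. (\<lambda>w. c * eval_fps S (qq (z + w))) (complex_of_real t))"
    by (simp add: TT_def c_def)
  have "((\<lambda>w. eval_fps S (qq (z + w))) has_field_derivative
           (eval_fps (fps_deriv S) (qq z) * (2 * complex_of_real pi * \<i> * qq z))) (at 0)"
    using DERIV_chain2[OF _ DERIV_add[OF DERIV_const[of z] DERIV_ident], of "\<lambda>w. eval_fps S (qq w)"]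
      DERIV_H[OF assms] by simp
  hence "((\<lambda>w. c * eval_fps S (qq (z + w))) has_field_derivative
           c * (eval_fps (fps_deriv S) (qq z) * (2 * complex_of_real pi * \<i> * qq z))) (at (of_real 0))"
    by (auto intro: DERIV_cmult)
  from has_vector_derivative_real_field[OF this] show ?thesis unfolding e c_def by simp
qed

lemma TT_imag_dir:
  assumes z: "z \<in> upper_half" and R: "1 \<le> fps_conv_radius S"
  shows "((\<lambda>t. TT j S (z + \<i> * complex_of_real t)) has_vector_derivative
     (- of_nat j * (complex_of_real (1 / Im z)) ^ (Suc j) * eval_fps S (qq z) +
      (complex_of_real (1 / Im z)) ^ j * (eval_fps (fps_deriv S) (qq z) * (2 * complex_of_real pi * \<i> * qq z)) * \<i>)) (at 0)"
proof -
  define y where "y = Im z"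
  have y: "y > 0" using z by (simp add: y_def upper_half_def)
  define H' where "H' = eval_fps (fps_deriv S) (qq z) * (2 * complex_of_real pi * \<i> * qq z)"
  have e: "(\<lambda>t. TT j S (z + \<i> * complex_of_real t)) =
      (\<lambda>t. (\<lambda>w. (1 / (complex_of_real y + w)) ^ j * eval_fps S (qq (z + \<i> * w))) (complex_of_real t))"
    by (auto simp: TT_def y_def)
  have d1: "((\<lambda>w. eval_fps S (qq (z + \<i> * w))) has_field_derivative H' * \<i>) (at 0)"
    using DERIV_chain2[OF _ DERIV_add[OF DERIV_const[of z] DERIV_cmult[OF DERIV_ident, of \<i>]], of "\<lambda>w. eval_fps S (qq w)"]
      DERIV_H[OF assms] by (simp add: H'_def)
  have d2: "((\<lambda>w. (1 / (complex_of_real y + w)) ^ j) has_field_derivative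
      (- of_nat j * (1 / complex_of_real y) ^ Suc j)) (at 0)"
  proof -
    have di: "((\<lambda>w. 1 / (complex_of_real y + w)) has_field_derivative (- 1 / (complex_of_real y) ^ 2)) (at 0)"
      using y by (auto intro!: derivative_eq_intros simp: field_simps power2_eq_square)
    have "((\<lambda>w. (1 / (complex_of_real y + w)) ^ j) has_field_derivative
      (of_nat j * ((- 1 / (complex_of_real y) ^ 2) * (1 / (complex_of_real y + 0)) ^ (j - Suc 0)))) (at 0)"
      by (rule DERIV_power[OF di])
    moreover have "of_nat j * ((- 1 / (complex_of_real y) ^ 2) * (1 / (complex_of_real y + 0)) ^ (j - Suc 0))
         = - of_nat j * (1 / complex_of_real y) ^ Suc j"
      using y by (cases j) (auto simp: field_simps power2_eq_square)
    ultimately show ?thesis by simp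
  qed
  have "((\<lambda>w. (1 / (complex_of_real y + w)) ^ j * eval_fps S (qq (z + \<i> * w))) has_field_derivative
     (- of_nat j * (1 / complex_of_real y) ^ Suc j) * eval_fps S (qq (z + \<i> * 0)) +
      (1 / (complex_of_real y + 0)) ^ j * (H' * \<i>)) (at (of_real 0))"
    using DERIV_mult[OF d2 d1] by (simp add: algebra_simps)
  from has_vector_derivative_real_field[OF this] show ?thesis unfolding e
    by (simp add: y_def H'_def algebra_simps)
qed

lemma rad_XD: "1 \<le> fps_conv_radius (S::complex fps) \<Longrightarrow> 1 \<le> fps_conv_radius (fps_X * fps_deriv S)"
  using fps_conv_radius_mult[of fps_X "fps_deriv S"] fps_conv_radius_deriv[of S] by auto

lemma rad_cS: "1 \<le> fps_conv_radius (S::complex fps) \<Longrightarrow> 1 \<le> fps_conv_radius (fps_const c * S)"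
  using fps_conv_radius_mult[of "fps_const c" S] by auto

lemma rad_add: "1 \<le> fps_conv_radius (S::complex fps) \<Longrightarrow> 1 \<le> fps_conv_radius T \<Longrightarrow> 1 \<le> fps_conv_radius (S + T)"
  using fps_conv_radius_add[of S T] by (simp add: min_def split: if_splits)

lemma eval_XD: "z \<in> upper_half \<Longrightarrow> 1 \<le> fps_conv_radius S \<Longrightarrow>
   eval_fps (fps_X * fps_deriv S) (qq z) = qq z * eval_fps (fps_deriv S) (qq z)"
  by (subst eval_fps_mult) (auto intro: less_le_trans[OF qq_lt_radius fps_conv_radius_deriv])

lemma eval_cS: "z \<in> upper_half \<Longrightarrow> 1 \<le> fps_conv_radius S \<Longrightarrow>
   eval_fps (fps_const c * S) (qq z) = c * eval_fps S (qq z)"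
  by (subst eval_fps_mult) (auto intro: qq_lt_radius)

lemma NH_maass:
  assumes "NH F" shows "NH (maass_shimura k F)"
proof -
  from assms obtain J S where SR: "\<And>j. 1 \<le> fps_conv_radius (S j)" and S0: "\<And>j. fps_nth (S j) 0 = 0"
    and FE: "\<And>z. z \<in> upper_half \<Longrightarrow> F z = (\<Sum>j<J. (complex_of_real (1 / Im z)) ^ j * eval_fps (S j) (qq z))"
    unfolding NH_def by blast
  define \<kappa> where "\<kappa> j = (1 / (2 * complex_of_real pi * \<i>)) * (of_int k / (2 * \<i>) + \<i> * of_nat j / 2)" for j :: nat
  define S' where "S' j = (if j < J then fps_X * fps_deriv (S j) else 0) +
      (if j = 0 then 0 else fps_const (\<kappa> (j - 1)) * S (j - 1))" for j
  have R1: "1 \<le> fps_conv_radius (if j < J then fps_X * fps_deriv (S j) else 0)" for j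
    using rad_XD[OF SR[of j]] by auto
  have R2: "1 \<le> fps_conv_radius (if j = 0 then 0 else fps_const (\<kappa> (j - 1)) * S (j - 1))" for j
    using rad_cS[OF SR[of "j - 1"]] by auto
  have S'R: "1 \<le> fps_conv_radius (S' j)" for j
    unfolding S'_def by (rule rad_add[OF R1 R2])
  have S'0: "fps_nth (S' j) 0 = 0" for j
    by (simp add: S'_def S0)
  have ME: "maass_shimura k F z = (\<Sum>j<Suc J. (complex_of_real (1 / Im z)) ^ j * eval_fps (S' j) (qq z))"
    if z: "z \<in> upper_half" for z
  proof -
    define c where "c = complex_of_real (1 / Im z)"
    define H where "H j = eval_fps (S j) (qq z)" for j
    define D where "D j = eval_fps (fps_deriv (S j)) (qq z)" for j
    define H' where "H' j = D j * (2 * complex_of_real pi * \<i> * qq z)" for j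
    have y: "Im z > 0" using z by (simp add: upper_half_def)
    have A: "vector_derivative (\<lambda>t. F (z + complex_of_real t)) (at 0) = (\<Sum>j<J. c ^ j * H' j)"
    proof -
      have "(\<lambda>t. F (z + complex_of_real t)) = (\<lambda>t. \<Sum>j<J. TT j (S j) (z + complex_of_real t))"
      proof
        fix t :: real
        have "z + complex_of_real t \<in> upper_half" using z by (simp add: upper_half_def)
        thus "F (z + complex_of_real t) = (\<Sum>j<J. TT j (S j) (z + complex_of_real t))"
          by (simp add: FE TT_def)
      qed
      moreover have "((\<lambda>t. \<Sum>j<J. TT j (S j) (z + complex_of_real t)) has_vector_derivative (\<Sum>j<J. c ^ j * H' j)) (at 0)"
        by (rule has_vector_derivative_sum) (use TT_real_dir[OF z SR] in \<open>simp add: c_def H'_def D_def\<close>)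
      ultimately show ?thesis by (simp add: vector_derivative_at)
    qed
    have B: "vector_derivative (\<lambda>t. F (z + \<i> * complex_of_real t)) (at 0) =
       (\<Sum>j<J. - of_nat j * c ^ (Suc j) * H j + c ^ j * H' j * \<i>)"
    proof -
      have "((\<lambda>t. \<Sum>j<J. TT j (S j) (z + \<i> * complex_of_real t)) has_vector_derivative
           (\<Sum>j<J. - of_nat j * c ^ (Suc j) * H j + c ^ j * H' j * \<i>)) (at 0)"
        by (rule has_vector_derivative_sum) (use TT_imag_dir[OF z SR] in \<open>simp add: c_def H'_def D_def H_def\<close>)
      hence "((\<lambda>t. F (z + \<i> * complex_of_real t)) has_vector_derivative
           (\<Sum>j<J. - of_nat j * c ^ (Suc j) * H j + c ^ j * H' j * \<i>)) (at 0)"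
      proof (rule has_vector_derivative_transform_within_open[where S = "{t. - Im z < t}"])
        show "open {t. - Im z < t}" by (simp add: open_Collect_less)
        show "(0::real) \<in> {t. - Im z < t}" using y by simp
        fix t assume "t \<in> {t. - Im z < t}"
        hence "z + \<i> * complex_of_real t \<in> upper_half" by (simp add: upper_half_def)
        thus "(\<Sum>j<J. TT j (S j) (z + \<i> * complex_of_real t)) = F (z + \<i> * complex_of_real t)"
          by (simp add: FE TT_def)
      qed
      thus ?thesis by (simp add: vector_derivative_at)
    qed
    have "maass_shimura k F z = (\<Sum>j<J. c ^ j * (qq z * D j) + \<kappa> j * c ^ Suc j * H j)"
    proof -
      have cz: "c = 1 / complex_of_real (Im z)" by (simp add: c_def)
      have "maass_shimura k F z = (1 / (2 * complex_of_real pi * \<i>)) *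
         (of_int k / (2 * \<i> * complex_of_real (Im z)) * (\<Sum>j<J. c ^ j * H j) +
          ((\<Sum>j<J. c ^ j * H' j) - \<i> * (\<Sum>j<J. - of_nat j * c ^ (Suc j) * H j + c ^ j * H' j * \<i>)) / 2)"
        unfolding maass_shimura_def wirtinger_dz_def A B using FE[OF z] by (simp add: c_def H_def)
      also have "\<dots> = (\<Sum>j<J. (1 / (2 * complex_of_real pi * \<i>)) *
         (of_int k / (2 * \<i> * complex_of_real (Im z)) * (c ^ j * H j) +
          ((c ^ j * H' j) - \<i> * (- of_nat j * c ^ (Suc j) * H j + c ^ j * H' j * \<i>)) / 2))"
        by (simp add: sum_distrib_left sum_divide_distrib sum.distrib sum_subtractf right_diff_distrib
              distrib_left add_divide_distrib diff_divide_distrib mult.assoc sum_negf)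
      also have "\<dots> = (\<Sum>j<J. c ^ j * (qq z * D j) + \<kappa> j * c ^ Suc j * H j)"
        by (rule sum.cong) (use y in \<open>auto simp: \<kappa>_def H'_def cz field_simps\<close>)
      finally show ?thesis .
    qed
    also have "\<dots> = (\<Sum>j<Suc J. c ^ j * eval_fps (S' j) (qq z))"
    proof -
      have ev: "eval_fps (S' j) (qq z) = (if j < J then qq z * D j else 0) +
          (if j = 0 then 0 else \<kappa> (j - 1) * H (j - 1))" for j
        unfolding S'_def
        by (subst eval_fps_add[OF qq_lt_radius[OF z R1] qq_lt_radius[OF z R2]])
           (auto simp: eval_XD[OF z SR] eval_cS[OF z SR] D_def H_def)
      have "(\<Sum>j<Suc J. c ^ j * eval_fps (S' j) (qq z)) =
         (\<Sum>j<Suc J. c ^ j * (if j < J then qq z * D j else 0)) +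
         (\<Sum>j<Suc J. c ^ j * (if j = 0 then 0 else \<kappa> (j - 1) * H (j - 1)))"
        by (simp add: ev distrib_left sum.distrib)
      also have "(\<Sum>j<Suc J. c ^ j * (if j < J then qq z * D j else 0)) = (\<Sum>j<J. c ^ j * (qq z * D j))"
        by simp
      also have "(\<Sum>j<Suc J. c ^ j * (if j = 0 then 0 else \<kappa> (j - 1) * H (j - 1))) = (\<Sum>j<J. \<kappa> j * c ^ Suc j * H j)"
        by (subst sum.lessThan_Suc_shift) (simp add: algebra_simps)
      finally show ?thesis by (simp add: sum.distrib)
    qed
    finally show ?thesis by (simp add: c_def)
  qed
  show ?thesis unfolding NH_def
    by (rule exI[of _ "Suc J"], rule exI[of _ S']) (use S'R S'0 ME in auto)
qed

lemma NH_iter: "NH f \<Longrightarrow> NH (maass_shimura_iter k r f)"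
  by (induction r) (auto intro: NH_maass)

lemma rou_sum:
  assumes d: "d \<ge> 1"
  shows "(\<Sum>b<d. exp (2 * complex_of_real pi * \<i> * of_nat m / of_nat d) ^ b) = (if d dvd m then of_nat d else 0)"
proof -
  define \<omega> where "\<omega> = exp (2 * complex_of_real pi * \<i> * of_nat m / of_nat d)"
  have e1: "\<omega> = 1 \<longleftrightarrow> d dvd m" unfolding \<omega>_def by (rule complex_root_unity_eq_1[OF d])
  have e2: "\<omega> ^ d = 1" unfolding \<omega>_def using complex_root_unity[of d m] d by simp
  show ?thesis unfolding \<omega>_def[symmetric] sum_gp_strict using e1 e2 by auto
qed

definition dec :: "nat \<Rightarrow> complex fps \<Rightarrow> complex fps" where
  "dec d T = Abs_fps (\<lambda>m. fps_nth T (d * m))"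

lemma dec_nth [simp]: "fps_nth (dec d T) m = fps_nth T (d * m)"
  by (simp add: dec_def)

lemma dec_rad:
  assumes d: "d \<ge> 1" and R: "1 \<le> fps_conv_radius T"
  shows "1 \<le> fps_conv_radius (dec d T)"
  unfolding fps_conv_radius_def
proof (rule conv_radius_geI_ex')
  fix r :: real assume r: "0 < r" "ereal r < 1"
  hence r1: "r < 1" by simp
  define \<rho> where "\<rho> = root d r"
  have \<rho>0: "0 < \<rho>" using r d by (simp add: \<rho>_def)
  have \<rho>1: "\<rho> < 1" using real_root_less_mono[of d r 1] d r1 by (simp add: \<rho>_def)
  have \<rho>d: "\<rho> ^ d = r" using r d by (simp add: \<rho>_def)
  have "ereal (norm (complex_of_real \<rho>)) < fps_conv_radius T"
    using \<rho>0 \<rho>1 R by (intro less_le_trans[OF _ R]) auto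
  hence sn: "summable (\<lambda>n. norm (fps_nth T n * complex_of_real \<rho> ^ n))"
    by (rule norm_summable_fps)
  define f where "f n = (if d dvd n then norm (fps_nth T n * complex_of_real \<rho> ^ n) else 0)" for n
  have sf: "summable f"
    by (rule summable_comparison_test[OF _ sn]) (auto simp: f_def)
  have "summable (\<lambda>m. f (d * m))"
  proof (subst summable_mono_reindex)
    show "strict_mono ((*) d)" using d by (simp add: strict_mono_def)
    show "n \<notin> range ((*) d) \<Longrightarrow> f n = 0" for n by (auto simp: f_def)
  qed (rule sf)
  moreover have "f (d * m) = norm (fps_nth (dec d T) m * complex_of_real r ^ m)" for m
    by (simp add: f_def norm_mult norm_power power_mult \<rho>d[symmetric] abs_of_pos[OF \<rho>0])
  ultimately have "summable (\<lambda>m. norm (fps_nth (dec d T) m * complex_of_real r ^ m))" by simp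
  thus "summable (\<lambda>m. fps_nth (dec d T) m * complex_of_real r ^ m)"
    by (rule summable_norm_cancel)
qed

lemma rou_eval:
  assumes d: "d \<ge> 1" and X: "X \<in> upper_half" and R: "1 \<le> fps_conv_radius T"
  shows "(\<Sum>b<d. eval_fps T (qq ((X + of_nat b) / of_nat d))) = of_nat d * eval_fps (dec d T) (qq X)"
proof -
  define w where "w = qq (X / of_nat d)"
  define \<omega> where "\<omega> m = exp (2 * complex_of_real pi * \<i> * of_nat m / of_nat d)" for m :: nat
  have dpos: "(of_nat d :: complex) \<noteq> 0" using d by simp
  have XbH: "(X + of_nat b) / of_nat d \<in> upper_half" for b
    using X d by (simp add: upper_half_def Im_divide_of_nat)
  have pw: "qq ((X + of_nat b) / of_nat d) ^ m = w ^ m * \<omega> m ^ b" for b m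
  proof -
    have "qq ((X + of_nat b) / of_nat d) = w * exp (2 * complex_of_real pi * \<i> * of_nat b / of_nat d)"
      by (simp add: w_def qq_def exp_add[symmetric] add_divide_distrib algebra_simps)
    hence "qq ((X + of_nat b) / of_nat d) ^ m = w ^ m * exp (of_nat m * (2 * complex_of_real pi * \<i> * of_nat b / of_nat d))"
      by (simp only: power_mult_distrib exp_of_nat_mult)
    also have "exp (of_nat m * (2 * complex_of_real pi * \<i> * of_nat b / of_nat d)) = exp (of_nat b * (2 * complex_of_real pi * \<i> * of_nat m / of_nat d))"
      by (simp add: algebra_simps)
    also have "\<dots> = \<omega> m ^ b" unfolding \<omega>_def by (rule exp_of_nat_mult)
    finally show ?thesis .
  qed
  have summ: "summable (\<lambda>m. fps_nth T m * qq ((X + of_nat b) / of_nat d) ^ m)" for b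
    by (rule summable_fps[OF qq_lt_radius[OF XbH R]])
  define f where "f m = fps_nth T m * w ^ m * (if d dvd m then of_nat d else 0)" for m
  have "(\<Sum>b<d. eval_fps T (qq ((X + of_nat b) / of_nat d))) =
      (\<Sum>m. \<Sum>b<d. fps_nth T m * qq ((X + of_nat b) / of_nat d) ^ m)"
    unfolding eval_fps_def by (rule suminf_sum[symmetric]) (rule summ)
  also have "(\<lambda>m. \<Sum>b<d. fps_nth T m * qq ((X + of_nat b) / of_nat d) ^ m) = f"
  proof
    fix m
    have "(\<Sum>b<d. fps_nth T m * qq ((X + of_nat b) / of_nat d) ^ m) = fps_nth T m * w ^ m * (\<Sum>b<d. \<omega> m ^ b)"
      by (simp add: pw sum_distrib_left mult.assoc)
    thus "(\<Sum>b<d. fps_nth T m * qq ((X + of_nat b) / of_nat d) ^ m) = f m"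
      by (simp add: f_def \<omega>_def rou_sum[OF d])
  qed
  finally have L: "(\<Sum>b<d. eval_fps T (qq ((X + of_nat b) / of_nat d))) = suminf f" .
  have sf: "summable f"
  proof -
    have "summable (\<lambda>m. \<Sum>b<d. fps_nth T m * qq ((X + of_nat b) / of_nat d) ^ m)"
      by (rule summable_sum) (rule summ)
    also have "(\<lambda>m. \<Sum>b<d. fps_nth T m * qq ((X + of_nat b) / of_nat d) ^ m) = f"
    proof
      fix m
      have "(\<Sum>b<d. fps_nth T m * qq ((X + of_nat b) / of_nat d) ^ m) = fps_nth T m * w ^ m * (\<Sum>b<d. \<omega> m ^ b)"
        by (simp add: pw sum_distrib_left mult.assoc)
      thus "(\<Sum>b<d. fps_nth T m * qq ((X + of_nat b) / of_nat d) ^ m) = f m"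
        by (simp add: f_def \<omega>_def rou_sum[OF d])
    qed
    finally show ?thesis .
  qed
  have wd: "w ^ d = qq X"
    using dpos by (simp add: w_def qq_def exp_of_nat_mult[symmetric])
  have "(\<lambda>m. f (d * m)) sums suminf f"
  proof (subst sums_mono_reindex)
    show "strict_mono ((*) d)" using d by (simp add: strict_mono_def)
    show "n \<notin> range ((*) d) \<Longrightarrow> f n = 0" for n by (auto simp: f_def)
  qed (use sf in \<open>simp add: summable_sums\<close>)
  moreover have "(\<lambda>m. f (d * m)) = (\<lambda>m. of_nat d * (fps_nth (dec d T) m * qq X ^ m))"
    by (auto simp: f_def power_mult wd)
  moreover have "(\<lambda>m. of_nat d * (fps_nth (dec d T) m * qq X ^ m)) sums (of_nat d * eval_fps (dec d T) (qq X))"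
    by (rule sums_mult[OF sums_eval_fps[OF qq_lt_radius[OF X dec_rad[OF d R]]]])
  ultimately have "suminf f = of_nat d * eval_fps (dec d T) (qq X)"
    using sums_unique2 by metis
  with L show ?thesis by simp
qed

lemma fps_decomp2:
  "T = fps_const (fps_nth T 0) + fps_const (fps_nth T 1) * fps_X + fps_X ^ 2 * fps_shift 2 (T :: complex fps)"
proof (rule fps_ext)
  fix n
  show "fps_nth T n = fps_nth (fps_const (fps_nth T 0) + fps_const (fps_nth T 1) * fps_X + fps_X ^ 2 * fps_shift 2 T) n"
    by (cases n; cases "n - 1") (auto simp: fps_X_power_mult_nth)
qed

lemma EST:
  assumes R: "1 \<le> fps_conv_radius (T :: complex fps)"
  shows "\<exists>C. \<forall>t. norm t \<le> 1/2 \<longrightarrow> norm (eval_fps T t - fps_nth T 0 - fps_nth T 1 * t) \<le> C * norm t ^ 2"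
proof -
  define G where "G = fps_shift 2 T"
  have RG: "1 \<le> fps_conv_radius G" using R by (simp add: G_def)
  have sub: "cball (0::complex) (1/2) \<subseteq> eball 0 (fps_conv_radius G)"
  proof (rule subsetI)
    fix t :: complex assume "t \<in> cball 0 (1/2)"
    hence "norm t \<le> 1/2" by (simp add: dist_norm)
    hence "ereal (norm t) < 1" by simp
    hence "ereal (norm t) < fps_conv_radius G" using RG by (rule less_le_trans)
    thus "t \<in> eball 0 (fps_conv_radius G)" unfolding in_eball_iff by simp
  qed
  have "continuous_on (cball 0 (1/2)) (eval_fps G)"
    by (rule continuous_on_subset[OF continuous_on_eval_fps sub])
  hence "compact (eval_fps G ` cball 0 (1/2))"
    by (rule compact_continuous_image) simp
  then obtain B where B: "\<And>t. t \<in> cball 0 (1/2) \<Longrightarrow> norm (eval_fps G t) \<le> B"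
    using compact_imp_bounded[of "eval_fps G ` cball 0 (1/2)"] unfolding bounded_iff by blast
  show ?thesis
  proof (rule exI[of _ B], intro allI impI)
    fix t :: complex assume t: "norm t \<le> 1/2"
    have t1: "ereal (norm t) < 1" using t by simp
    have tr: "ereal (norm t) < fps_conv_radius G" "ereal (norm t) < fps_conv_radius T"
      using less_le_trans[OF t1 RG] less_le_trans[OF t1 R] by auto
    have "eval_fps T t = eval_fps (fps_const (fps_nth T 0) + fps_const (fps_nth T 1) * fps_X + fps_X ^ 2 * G) t"
      by (subst fps_decomp2) (simp add: G_def)
    also have "\<dots> = fps_nth T 0 + fps_nth T 1 * t + t ^ 2 * eval_fps G t"
    proof -
      have r1: "ereal (norm t) < fps_conv_radius (fps_const (fps_nth T 0) + fps_const (fps_nth T 1) * fps_X)"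
        by (rule less_le_trans[OF _ fps_conv_radius_add]) (auto intro: less_le_trans[OF _ fps_conv_radius_mult])
      have r2: "ereal (norm t) < fps_conv_radius (fps_X ^ 2 * G)"
        by (rule less_le_trans[OF _ fps_conv_radius_mult]) (use tr in auto)
      have r3: "ereal (norm t) < fps_conv_radius (fps_const (fps_nth T 1) * fps_X)"
        by (auto intro: less_le_trans[OF _ fps_conv_radius_mult])
      have e1: "eval_fps (fps_const (fps_nth T 0) + fps_const (fps_nth T 1) * fps_X + fps_X ^ 2 * G) t =
          eval_fps (fps_const (fps_nth T 0) + fps_const (fps_nth T 1) * fps_X) t + eval_fps (fps_X ^ 2 * G) t"
        by (rule eval_fps_add[OF r1 r2])
      have e2: "eval_fps (fps_const (fps_nth T 0) + fps_const (fps_nth T 1) * fps_X) t =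
          eval_fps (fps_const (fps_nth T 0)) t + eval_fps (fps_const (fps_nth T 1) * fps_X) t"
        by (rule eval_fps_add[OF _ r3]) simp
      have e3: "eval_fps (fps_const (fps_nth T 1) * fps_X) t = fps_nth T 1 * t"
        by (subst eval_fps_mult) auto
      have e4: "eval_fps (fps_X ^ 2 * G) t = t ^ 2 * eval_fps G t"
        by (subst eval_fps_mult) (use tr in auto)
      show ?thesis using e1 e2 e3 e4 by simp
    qed
    finally have "eval_fps T t - fps_nth T 0 - fps_nth T 1 * t = t ^ 2 * eval_fps G t" by simp
    hence "norm (eval_fps T t - fps_nth T 0 - fps_nth T 1 * t) = norm t ^ 2 * norm (eval_fps G t)"
      by (simp add: norm_mult norm_power)
    also have "\<dots> \<le> norm t ^ 2 * B" using B[of t] t by (intro mult_left_mono) auto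
    finally show "norm (eval_fps T t - fps_nth T 0 - fps_nth T 1 * t) \<le> B * norm t ^ 2" by (simp add: mult.commute)
  qed
qed

lemma EST1:
  assumes R: "1 \<le> fps_conv_radius (T :: complex fps)" and T0: "fps_nth T 0 = 0"
  shows "\<exists>C. \<forall>t. norm t \<le> 1/2 \<longrightarrow> norm (eval_fps T t) \<le> C * norm t"
proof -
  obtain C where C: "\<And>t. norm t \<le> 1/2 \<Longrightarrow> norm (eval_fps T t - fps_nth T 0 - fps_nth T 1 * t) \<le> C * norm t ^ 2"
    using EST[OF R] by blast
  show ?thesis
  proof (rule exI[of _ "norm (fps_nth T 1) + \<bar>C\<bar>"], intro allI impI)
    fix t :: complex assume t: "norm t \<le> 1/2"
    have "norm (eval_fps T t) \<le> norm (fps_nth T 1 * t) + norm (eval_fps T t - fps_nth T 0 - fps_nth T 1 * t)"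
      using T0 norm_triangle_ineq[of "fps_nth T 1 * t" "eval_fps T t - fps_nth T 0 - fps_nth T 1 * t"] by simp
    also have "\<dots> \<le> norm (fps_nth T 1) * norm t + \<bar>C\<bar> * norm t"
    proof -
      have "C * norm t ^ 2 \<le> \<bar>C\<bar> * norm t" 
      proof -
        have "C * norm t ^ 2 \<le> \<bar>C\<bar> * norm t ^ 2" by (intro mult_right_mono) auto
        also have "\<dots> \<le> \<bar>C\<bar> * norm t" using t by (intro mult_left_mono) (auto simp: power2_eq_square intro: mult_left_le_one_le)
        finally show ?thesis .
      qed
      thus ?thesis using C[OF t] by (simp add: norm_mult)
    qed
    finally show "norm (eval_fps T t) \<le> (norm (fps_nth T 1) + \<bar>C\<bar>) * norm t" by (simp add: algebra_simps)
  qed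
qed

lemma POLY:
  fixes \<beta> :: "nat \<Rightarrow> complex"
  assumes J: "finite J" and B: "\<And>y. y \<ge> 1 \<Longrightarrow> norm (\<Sum>j\<in>J. (complex_of_real (1 / y)) ^ j * \<beta> j) \<le> D * exp (- 2 * pi * y)"
  shows "j \<in> J \<Longrightarrow> \<beta> j = 0"
proof (induction j rule: less_induct)
  case (less j)
  define g where "g y = (\<Sum>j'\<in>J. if j' < j then 0 else (complex_of_real (1 / y)) ^ (j' - j) * \<beta> j')" for y :: real
  have g_eq: "g y = (complex_of_real y) ^ j * (\<Sum>j'\<in>J. (complex_of_real (1 / y)) ^ j' * \<beta> j')" if y: "y \<ge> 1" for y
    unfolding g_def sum_distrib_left
  proof (rule sum.cong[OF refl])
    fix j' assume j': "j' \<in> J"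
    show "(if j' < j then 0 else (complex_of_real (1 / y)) ^ (j' - j) * \<beta> j') =
          complex_of_real y ^ j * (complex_of_real (1 / y) ^ j' * \<beta> j')"
    proof (cases "j' < j")
      case True thus ?thesis using less.IH[OF True j'] by simp
    next
      case False
      hence "j' = j + (j' - j)" by simp
      hence "complex_of_real (1 / y) ^ j' = complex_of_real (1 / y) ^ j * complex_of_real (1 / y) ^ (j' - j)"
        by (metis power_add)
      moreover have "complex_of_real y ^ j * complex_of_real (1 / y) ^ j = 1"
        using y by (simp add: power_mult_distrib[symmetric])
      ultimately show ?thesis using False by (simp add: mult.assoc[symmetric])
    qed
  qed
  have lim1: "(g \<longlongrightarrow> \<beta> j) at_top"
  proof -
    have "((\<lambda>y::real. complex_of_real (1 / y)) \<longlongrightarrow> complex_of_real 0) at_top"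
      by (rule tendsto_of_real, rule tendsto_divide_0[OF tendsto_const filterlim_at_top_imp_at_infinity[OF filterlim_ident]])
    hence inv0: "((\<lambda>y::real. complex_of_real (1 / y)) \<longlongrightarrow> 0) at_top" by simp
    have "(g \<longlongrightarrow> (\<Sum>j'\<in>J. if j' = j then \<beta> j' else 0)) at_top"
      unfolding g_def
    proof (rule tendsto_sum)
      fix j' assume "j' \<in> J"
      show "((\<lambda>y. if j' < j then 0 else complex_of_real (1 / y) ^ (j' - j) * \<beta> j') \<longlongrightarrow> (if j' = j then \<beta> j' else 0)) at_top"
      proof (cases "j' < j")
        case True thus ?thesis by simp
      next
        case False
        show ?thesis
        proof (cases "j' = j")
          case True thus ?thesis by simp
        next
          case ne: False
          have "((\<lambda>y. complex_of_real (1 / y) ^ (j' - j) * \<beta> j') \<longlongrightarrow> 0 ^ (j' - j) * \<beta> j') at_top"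
            by (intro tendsto_intros inv0)
          moreover have "(0::complex) ^ (j' - j) = 0" using False ne by simp
          ultimately show ?thesis using False ne by simp
        qed
      qed
    qed
    moreover have "(\<Sum>j'\<in>J. if j' = j then \<beta> j' else 0) = \<beta> j"
      using less.prems J by (simp add: sum.delta')
    ultimately show ?thesis by simp
  qed
  have lim0: "(g \<longlongrightarrow> 0) at_top"
  proof (rule Lim_null_comparison)
    show "eventually (\<lambda>y. norm (g y) \<le> \<bar>D\<bar> * (y ^ j / exp y)) at_top"
      using eventually_ge_at_top[of "1::real"]
    proof eventually_elim
      case (elim y)
      have "norm (g y) = y ^ j * norm (\<Sum>j'\<in>J. (complex_of_real (1 / y)) ^ j' * \<beta> j')"
        using elim by (simp add: g_eq norm_mult norm_power)
      also have "\<dots> \<le> y ^ j * (D * exp (- 2 * pi * y))"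
        using B[OF elim] elim by (intro mult_left_mono) auto
      also have "\<dots> \<le> y ^ j * (\<bar>D\<bar> * exp (- y))"
      proof (intro mult_left_mono)
        have "exp (- 2 * pi * y) \<le> exp (- y)" using elim pi_gt3 by simp
        thus "D * exp (- 2 * pi * y) \<le> \<bar>D\<bar> * exp (- y)"
          by (meson abs_ge_self abs_ge_zero exp_ge_zero mult_mono order_trans)
      qed (use elim in simp)
      also have "\<dots> = \<bar>D\<bar> * (y ^ j / exp y)" by (simp add: exp_minus field_simps)
      finally show ?case .
    qed
    show "((\<lambda>y. \<bar>D\<bar> * (y ^ j / exp y)) \<longlongrightarrow> 0) at_top"
      using tendsto_mult_right_zero[OF tendsto_power_div_exp_0] by simp
  qed
  show ?case using tendsto_unique[OF _ lim1 lim0] by simp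
qed

lemma UNI:
  fixes I :: "'a set" and e :: "'a \<Rightarrow> nat" and \<alpha> :: "'a \<Rightarrow> complex" and E :: "'a \<Rightarrow> real \<Rightarrow> complex"
  assumes I: "finite I"
    and EQ: "\<And>y. y \<ge> 1 \<Longrightarrow> (\<Sum>i\<in>I. (complex_of_real (1 / y)) ^ (e i) *
                 (\<alpha> i * complex_of_real (exp (- 2 * pi * y)) + E i y)) = 0"
    and EB: "\<And>i y. i \<in> I \<Longrightarrow> y \<ge> 1 \<Longrightarrow> norm (E i y) \<le> C * exp (- 4 * pi * y)"
  shows "(\<Sum>i\<in>{i\<in>I. e i = j}. \<alpha> i) = 0"
proof (cases "j \<in> e ` I")
  case False
  hence "{i\<in>I. e i = j} = {}" by auto
  thus ?thesis by (simp only: sum.empty)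
next
  case True
  define \<beta> where "\<beta> j = (\<Sum>i\<in>{i\<in>I. e i = j}. \<alpha> i)" for j
  have "\<beta> j = 0"
  proof (rule POLY[where J = "e ` I" and D = "real (card I) * \<bar>C\<bar>"])
    show "finite (e ` I)" using I by simp
    show "j \<in> e ` I" by (rule True)
    fix y :: real assume y: "y \<ge> 1"
    define c where "c = complex_of_real (1 / y)"
    have nc: "norm (c ^ m) \<le> 1" for m
    proof -
      have "norm c = 1 / y" using y unfolding c_def norm_of_real by simp
      hence "norm c \<le> 1" "0 \<le> norm c" using y by auto
      thus ?thesis by (simp add: norm_power power_le_one)
    qed
    have s_eq: "(\<Sum>j\<in>e ` I. c ^ j * \<beta> j) = (\<Sum>i\<in>I. c ^ e i * \<alpha> i)"
      by (subst sum.image_gen[OF I, of _ e]) (auto simp: \<beta>_def sum_distrib_left intro!: sum.cong)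
    define s where "s = (\<Sum>i\<in>I. c ^ e i * \<alpha> i)"
    have "s * complex_of_real (exp (- 2 * pi * y)) = - (\<Sum>i\<in>I. c ^ e i * E i y)"
      using EQ[OF y] by (simp add: s_def c_def sum_distrib_right distrib_left sum.distrib mult.assoc eq_neg_iff_add_eq_0)
    hence "norm s * exp (- 2 * pi * y) = norm (\<Sum>i\<in>I. c ^ e i * E i y)"
      by (metis abs_of_pos exp_gt_zero norm_minus_cancel norm_mult norm_of_real)
    also have "\<dots> \<le> (\<Sum>i\<in>I. norm (c ^ e i * E i y))" by (rule norm_sum)
    also have "\<dots> \<le> (\<Sum>i\<in>I. \<bar>C\<bar> * exp (- 4 * pi * y))"
    proof (rule sum_mono)
      fix i assume i: "i \<in> I"
      have "norm (c ^ e i * E i y) \<le> 1 * norm (E i y)"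
        unfolding norm_mult by (rule mult_right_mono[OF nc]) simp
      also have "\<dots> \<le> \<bar>C\<bar> * exp (- 4 * pi * y)"
        using EB[OF i y] by (simp add: order_trans[OF _ mult_right_mono[OF abs_ge_self]])
      finally show "norm (c ^ e i * E i y) \<le> \<bar>C\<bar> * exp (- 4 * pi * y)" .
    qed
    also have "\<dots> = (real (card I) * \<bar>C\<bar> * exp (- 2 * pi * y)) * exp (- 2 * pi * y)"
      by (simp add: exp_add[symmetric])
    finally have "norm s \<le> real (card I) * \<bar>C\<bar> * exp (- 2 * pi * y)"
      by (simp add: mult_le_cancel_right)
    thus "norm (\<Sum>j\<in>e ` I. complex_of_real (1 / y) ^ j * \<beta> j) \<le> real (card I) * \<bar>C\<bar> * exp (- 2 * pi * y)"
      using s_eq by (simp add: s_def c_def)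
  qed
  thus ?thesis by (simp add: \<beta>_def)
qed

definition GF :: "'a set \<Rightarrow> ('a \<Rightarrow> nat) \<Rightarrow> ('a \<Rightarrow> complex fps) \<Rightarrow> (complex \<Rightarrow> complex) \<Rightarrow> bool" where
  "GF I e S P \<longleftrightarrow> finite I \<and>
     (\<forall>i\<in>I. 1 \<le> fps_conv_radius (S i) \<and> fps_nth (S i) 0 = 0 \<and> fps_nth (S i) 1 = 0) \<and>
     (\<forall>z\<in>upper_half. P z = (\<Sum>i\<in>I. (complex_of_real (1 / Im z)) ^ (e i) * eval_fps (S i) (qq z)))"

lemma NH_prod:
  assumes "NH F" "NH G"
  shows "\<exists>(I :: (nat \<times> nat) set) e S. GF I e S (\<lambda>z. F z * G z)"
proof -
  from assms(1) obtain J1 S1 where R1: "\<And>j. 1 \<le> fps_conv_radius (S1 j)" and Z1: "\<And>j. fps_nth (S1 j) 0 = 0"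
    and E1: "\<And>z. z \<in> upper_half \<Longrightarrow> F z = (\<Sum>j<J1. (complex_of_real (1 / Im z)) ^ j * eval_fps (S1 j) (qq z))"
    unfolding NH_def by blast
  from assms(2) obtain J2 S2 where R2: "\<And>j. 1 \<le> fps_conv_radius (S2 j)" and Z2: "\<And>j. fps_nth (S2 j) 0 = 0"
    and E2: "\<And>z. z \<in> upper_half \<Longrightarrow> G z = (\<Sum>j<J2. (complex_of_real (1 / Im z)) ^ j * eval_fps (S2 j) (qq z))"
    unfolding NH_def by blast
  define I where "I = {..<J1} \<times> {..<J2}"
  define e where "e p = fst p + snd p" for p :: "nat \<times> nat"
  define S where "S p = S1 (fst p) * S2 (snd p)" for p :: "nat \<times> nat"
  have "GF I e S (\<lambda>z. F z * G z)"
    unfolding GF_def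
  proof (intro conjI ballI)
    show "finite I" by (simp add: I_def)
    fix p assume "p \<in> I"
    show "1 \<le> fps_conv_radius (S p)"
      using fps_conv_radius_mult[of "S1 (fst p)" "S2 (snd p)"] R1[of "fst p"] R2[of "snd p"]
      by (simp add: S_def min_def split: if_splits)
    show "fps_nth (S p) 0 = 0" by (simp add: S_def Z1)
    show "fps_nth (S p) 1 = 0" by (simp add: S_def fps_mult_nth Z1 Z2)
  next
    fix z assume z: "z \<in> upper_half"
    define c where "c = complex_of_real (1 / Im z)"
    have "F z * G z = (\<Sum>a<J1. \<Sum>b<J2. (c ^ a * eval_fps (S1 a) (qq z)) * (c ^ b * eval_fps (S2 b) (qq z)))"
      by (simp add: E1[OF z] E2[OF z] sum_product c_def)
    also have "\<dots> = (\<Sum>p\<in>I. (c ^ fst p * eval_fps (S1 (fst p)) (qq z)) * (c ^ snd p * eval_fps (S2 (snd p)) (qq z)))"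
      by (simp add: I_def sum.cartesian_product split_def)
    also have "\<dots> = (\<Sum>p\<in>I. c ^ e p * eval_fps (S p) (qq z))"
    proof (rule sum.cong[OF refl])
      fix p :: "nat \<times> nat"
      have "eval_fps (S p) (qq z) = eval_fps (S1 (fst p)) (qq z) * eval_fps (S2 (snd p)) (qq z)"
        unfolding S_def by (rule eval_fps_mult[OF qq_lt_radius[OF z R1] qq_lt_radius[OF z R2]])
      thus "(c ^ fst p * eval_fps (S1 (fst p)) (qq z)) * (c ^ snd p * eval_fps (S2 (snd p)) (qq z)) = c ^ e p * eval_fps (S p) (qq z)"
        by (simp add: e_def power_add)
    qed
    finally show "F z * G z = (\<Sum>p\<in>I. (complex_of_real (1 / Im z)) ^ e p * eval_fps (S p) (qq z))"
      by (simp add: c_def)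
  qed
  thus ?thesis by blast
qed

lemma hecke_GF:
  assumes GF: "GF I e S P" and n: "n \<ge> 1" and z: "z \<in> upper_half"
  shows "hecke K n P z = (\<Sum>i\<in>I. (complex_of_real (1 / Im z)) ^ e i *
     (\<Sum>d\<in>{d. d dvd n}. (of_nat n powi (K - 1) * of_nat d powi (- K) *
         (complex_of_real (real d ^ 2 / real n)) ^ e i * of_nat d) *
       eval_fps (dec d (S i)) (qq (of_nat n * z / of_nat d))))"
proof -
  have I: "finite I" and R: "\<And>i. i \<in> I \<Longrightarrow> 1 \<le> fps_conv_radius (S i)"
    and PE: "\<And>w. w \<in> upper_half \<Longrightarrow> P w = (\<Sum>i\<in>I. (complex_of_real (1 / Im w)) ^ (e i) * eval_fps (S i) (qq w))"
    using GF unfolding GF_def by auto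
  define c where "c = complex_of_real (1 / Im z)"
  have y: "Im z > 0" using z by (simp add: upper_half_def)
  have inner: "(\<Sum>b<d. P ((of_nat n * z + of_nat b * of_nat d) / (of_nat d)\<^sup>2)) =
     (\<Sum>i\<in>I. c ^ e i * ((complex_of_real (real d ^ 2 / real n)) ^ e i * of_nat d *
        eval_fps (dec d (S i)) (qq (of_nat n * z / of_nat d))))"
    if d: "d dvd n" for d
  proof -
    have d1: "d \<ge> 1" using d n by (cases d) auto
    have dC: "(of_nat d :: complex) \<noteq> 0" using d1 by simp
    define X where "X = of_nat n * z / of_nat d"
    have XH: "X \<in> upper_half" using z n d1 by (simp add: X_def upper_half_def Im_divide_of_nat)
    have pt: "(of_nat n * z + of_nat b * of_nat d) / (of_nat d)\<^sup>2 = (X + of_nat b) / of_nat d" for b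
      using dC by (simp add: X_def field_simps power2_eq_square)
    have ptH: "(X + of_nat b) / of_nat d \<in> upper_half" for b
      using XH d1 by (simp add: upper_half_def Im_divide_of_nat)
    have cw: "complex_of_real (1 / Im ((X + of_nat b) / of_nat d)) = complex_of_real (real d ^ 2 / real n) * c" for b
    proof -
      have imX: "Im X = real n * Im z / real d" by (simp add: X_def Im_divide_of_nat)
      have "Im ((X + of_nat b) / of_nat d) = Im X / real d" by (simp add: Im_divide_of_nat)
      also have "\<dots> = real n * Im z / (real d ^ 2)" unfolding imX by (simp add: power2_eq_square)
      finally have h: "Im ((X + of_nat b) / of_nat d) = real n * Im z / (real d ^ 2)" .
      have "1 / Im ((X + of_nat b) / of_nat d) = real d ^ 2 / real n * (1 / Im z)"
        unfolding h using n d1 y by (simp add: field_simps)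
      thus ?thesis by (simp only: c_def of_real_mult)
    qed
    have "(\<Sum>b<d. P ((of_nat n * z + of_nat b * of_nat d) / (of_nat d)\<^sup>2)) =
        (\<Sum>b<d. \<Sum>i\<in>I. (complex_of_real (real d ^ 2 / real n)) ^ e i * c ^ e i * eval_fps (S i) (qq ((X + of_nat b) / of_nat d)))"
      by (simp only: pt PE[OF ptH] cw power_mult_distrib)
    also have "\<dots> = (\<Sum>i\<in>I. (complex_of_real (real d ^ 2 / real n)) ^ e i * c ^ e i * (\<Sum>b<d. eval_fps (S i) (qq ((X + of_nat b) / of_nat d))))"
      by (subst sum.swap) (simp add: sum_distrib_left)
    also have "\<dots> = (\<Sum>i\<in>I. c ^ e i * ((complex_of_real (real d ^ 2 / real n)) ^ e i * of_nat d *
        eval_fps (dec d (S i)) (qq X)))"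
      by (rule sum.cong[OF refl]) (simp add: rou_eval[OF d1 XH R])
    finally show ?thesis by (simp add: X_def)
  qed
  have "hecke K n P z = of_nat n powi (K - 1) * (\<Sum>d | d dvd n. of_nat d powi (- K) *
      (\<Sum>i\<in>I. c ^ e i * ((complex_of_real (real d ^ 2 / real n)) ^ e i * of_nat d *
        eval_fps (dec d (S i)) (qq (of_nat n * z / of_nat d)))))"
    unfolding hecke_def by (intro arg_cong2[where f = "(*)"] refl sum.cong) (auto simp: inner)
  also have "\<dots> = (\<Sum>d\<in>{d. d dvd n}. \<Sum>i\<in>I. c ^ e i *
     ((of_nat n powi (K - 1) * of_nat d powi (- K) *
         (complex_of_real (real d ^ 2 / real n)) ^ e i * of_nat d) *
       eval_fps (dec d (S i)) (qq (of_nat n * z / of_nat d))))"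
    by (simp add: sum_distrib_left mult_ac)
  also have "\<dots> = (\<Sum>i\<in>I. \<Sum>d\<in>{d. d dvd n}. c ^ e i *
     ((of_nat n powi (K - 1) * of_nat d powi (- K) *
         (complex_of_real (real d ^ 2 / real n)) ^ e i * of_nat d) *
       eval_fps (dec d (S i)) (qq (of_nat n * z / of_nat d))))"
    by (rule sum.swap)
  also have "\<dots> = (\<Sum>i\<in>I. c ^ e i *
     (\<Sum>d\<in>{d. d dvd n}. (of_nat n powi (K - 1) * of_nat d powi (- K) *
         (complex_of_real (real d ^ 2 / real n)) ^ e i * of_nat d) *
       eval_fps (dec d (S i)) (qq (of_nat n * z / of_nat d))))"
    by (simp add: sum_distrib_left)
  finally show ?thesis by (simp add: c_def)
qed

lemma qq_imag: "qq (of_nat n * (\<i> * complex_of_real y) / of_nat d) = complex_of_real (exp (- 2 * pi * (real n / real d) * y))"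
proof -
  have h: "2 * complex_of_real pi * \<i> * (of_nat n * (\<i> * complex_of_real y) / of_nat d) =
        complex_of_real (- 2 * pi * (real n / real d) * y)"
    by (simp add: field_simps)
  show ?thesis unfolding qq_def h by (rule exp_of_real)
qed

lemma ASYM:
  assumes R: "1 \<le> fps_conv_radius T" and T0: "fps_nth T 0 = 0" and n: "n \<ge> 1"
  shows "\<exists>C. \<forall>y\<ge>1. norm ((\<Sum>d\<in>{d. d dvd n}. (of_nat n powi (K - 1) * of_nat d powi (- K) *
         (complex_of_real (real d ^ 2 / real n)) ^ e * of_nat d) *
       eval_fps (dec d T) (qq (of_nat n * (\<i> * complex_of_real y) / of_nat d)))
       - of_nat n ^ e * fps_nth T n * complex_of_real (exp (- 2 * pi * y))) \<le> C * exp (- 4 * pi * y)"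
proof -
  define \<kappa> where "\<kappa> d = of_nat n powi (K - 1) * of_nat d powi (- K) *
         (complex_of_real (real d ^ 2 / real n)) ^ e * (of_nat d :: complex)" for d :: nat
  define t where "t d y = exp (- 2 * pi * (real n / real d) * y)" for d :: nat and y :: real
  define D' where "D' = {d. d dvd n \<and> d \<noteq> n}"
  have nC: "(of_nat n :: complex) \<noteq> 0" using n by simp
  have fD': "finite D'" unfolding D'_def using n by (auto intro: finite_subset[OF _ finite_divisors_nat[of n]])
  have Dsplit: "{d. d dvd n} = insert n D'" by (auto simp: D'_def)
  have \<kappa>n: "\<kappa> n = of_nat n ^ e"
  proof -
    have pw: "of_nat n powi (K - 1) * of_nat n powi (- K) = inverse (of_nat n :: complex)"
      using power_int_add[of "of_nat n :: complex" "K - 1" "- K"] nC by simp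
    have "of_nat n powi (K - 1) * of_nat n powi (- K) * (of_nat n :: complex) = 1"
      unfolding pw using nC by simp

    moreover have "complex_of_real (real n ^ 2 / real n) = of_nat n" using n by (simp add: power2_eq_square)
    ultimately show ?thesis by (simp add: \<kappa>_def mult_ac)
  qed
  have small: "exp (- 2 * pi * y) \<le> 1 / 2" if y: "y \<ge> 1" for y
  proof -
    have "1 \<le> 2 * pi * y" using y pi_gt3 mult_mono[of 1 "2 * pi" 1 y] by simp
    hence "exp (- 2 * pi * y) \<le> exp (- 1)" by simp
    also have "exp (-1::real) \<le> 1 / 2"
      using exp_ge_add_one_self[of "1::real"] by (simp add: exp_minus field_simps)
    finally show ?thesis .
  qed
  have tD: "t d y \<le> exp (- 4 * pi * y)" if d: "d \<in> D'" and y: "y \<ge> 1" for d y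
  proof -
    from d have dn: "d dvd n" "d \<noteq> n" by (auto simp: D'_def)
    then obtain a where a: "n = d * a" by blast
    have d1: "d \<ge> 1" using dn n by (cases d) auto
    have a2: "a \<ge> 2" using a dn n by (cases a; cases "a - 1") auto
    have "real n / real d = real a" using a d1 by simp
    hence "t d y = exp (- 2 * pi * real a * y)" by (simp add: t_def)
    also have "\<dots> \<le> exp (- 4 * pi * y)" using a2 y by (simp add: mult_right_mono)
    finally show ?thesis .
  qed
  have tpos: "t d y > 0" for d y by (simp add: t_def)
  have qt: "qq (of_nat n * (\<i> * complex_of_real y) / of_nat d) = complex_of_real (t d y)" for d y
    by (simp add: qq_imag t_def)
  have tn: "t n y = exp (- 2 * pi * y)" for y using n by (simp add: t_def)
  obtain C0 where C0: "\<And>w. norm w \<le> 1/2 \<Longrightarrow> norm (eval_fps (dec n T) w - fps_nth (dec n T) 0 - fps_nth (dec n T) 1 * w) \<le> C0 * norm w ^ 2"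
    using EST[OF dec_rad[OF n R]] by blast
  have "\<forall>d\<in>D'. \<exists>C. \<forall>w. norm w \<le> 1/2 \<longrightarrow> norm (eval_fps (dec d T) w) \<le> C * norm w"
  proof
    fix d assume "d \<in> D'"
    hence d1: "d \<ge> 1" using n by (cases d) (auto simp: D'_def)
    show "\<exists>C. \<forall>w. norm w \<le> 1/2 \<longrightarrow> norm (eval_fps (dec d T) w) \<le> C * norm w"
      by (rule EST1[OF dec_rad[OF d1 R]]) (simp add: T0)
  qed
  then obtain Cd where Cd: "\<And>d w. d \<in> D' \<Longrightarrow> norm w \<le> 1/2 \<Longrightarrow> norm (eval_fps (dec d T) w) \<le> Cd d * norm w"
    by metis
  define C where "C = norm (of_nat n ^ e :: complex) * \<bar>C0\<bar> + (\<Sum>d\<in>D'. norm (\<kappa> d) * \<bar>Cd d\<bar>)"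
  show ?thesis
  proof (rule exI[of _ C], intro allI impI)
    fix y :: real assume y: "y \<ge> 1"
    have e42: "exp (- 4 * pi * y) \<le> exp (- 2 * pi * y)" using y by simp
    have tle: "t d y \<le> 1 / 2" if "d \<in> D'" for d using tD[OF that y] e42 small[OF y] by linarith
    have "(\<Sum>d\<in>{d. d dvd n}. \<kappa> d * eval_fps (dec d T) (qq (of_nat n * (\<i> * complex_of_real y) / of_nat d)))
       - of_nat n ^ e * fps_nth T n * complex_of_real (exp (- 2 * pi * y)) =
       of_nat n ^ e * (eval_fps (dec n T) (complex_of_real (t n y)) - fps_nth (dec n T) 0 - fps_nth (dec n T) 1 * complex_of_real (t n y))
       + (\<Sum>d\<in>D'. \<kappa> d * eval_fps (dec d T) (complex_of_real (t d y)))"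
    proof -
      have nD: "n \<notin> D'" by (simp add: D'_def)
      have "(\<Sum>d\<in>{d. d dvd n}. \<kappa> d * eval_fps (dec d T) (qq (of_nat n * (\<i> * complex_of_real y) / of_nat d))) =
          \<kappa> n * eval_fps (dec n T) (complex_of_real (t n y)) + (\<Sum>d\<in>D'. \<kappa> d * eval_fps (dec d T) (complex_of_real (t d y)))"
        unfolding Dsplit by (simp add: sum.insert[OF fD' nD] qt)
      thus ?thesis by (simp add: \<kappa>n tn T0 algebra_simps)
    qed
    also have "norm \<dots> \<le> norm (of_nat n ^ e :: complex) * (\<bar>C0\<bar> * exp (- 4 * pi * y)) +
        (\<Sum>d\<in>D'. norm (\<kappa> d) * (\<bar>Cd d\<bar> * exp (- 4 * pi * y)))"
    proof (rule order_trans[OF norm_triangle_ineq add_mono])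
      have "norm (eval_fps (dec n T) (complex_of_real (t n y)) - fps_nth (dec n T) 0 - fps_nth (dec n T) 1 * complex_of_real (t n y))
          \<le> C0 * norm (complex_of_real (t n y)) ^ 2"
        using C0[of "complex_of_real (t n y)"] small[OF y] tpos[of n y] by (simp add: tn)
      also have "\<dots> \<le> \<bar>C0\<bar> * exp (- 4 * pi * y)"
      proof -
        have "norm (complex_of_real (t n y)) ^ 2 = exp (- 4 * pi * y)"
          using tpos[of n y] by (simp add: tn power2_eq_square exp_add[symmetric])
        thus ?thesis by (simp add: mult_right_mono)
      qed
      finally show "norm (of_nat n ^ e * (eval_fps (dec n T) (complex_of_real (t n y)) - fps_nth (dec n T) 0 - fps_nth (dec n T) 1 * complex_of_real (t n y)))
          \<le> norm (of_nat n ^ e :: complex) * (\<bar>C0\<bar> * exp (- 4 * pi * y))"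
        unfolding norm_mult by (rule mult_left_mono) simp
    next
      show "norm (\<Sum>d\<in>D'. \<kappa> d * eval_fps (dec d T) (complex_of_real (t d y))) \<le>
          (\<Sum>d\<in>D'. norm (\<kappa> d) * (\<bar>Cd d\<bar> * exp (- 4 * pi * y)))"
      proof (rule order_trans[OF norm_sum sum_mono])
        fix d assume d: "d \<in> D'"
        have "norm (eval_fps (dec d T) (complex_of_real (t d y))) \<le> Cd d * norm (complex_of_real (t d y))"
          using Cd[OF d, of "complex_of_real (t d y)"] tle[OF d] tpos[of d y] by simp
        also have "\<dots> \<le> \<bar>Cd d\<bar> * exp (- 4 * pi * y)"
        proof -
          have "Cd d * t d y \<le> \<bar>Cd d\<bar> * t d y" using tpos[of d y] by (intro mult_right_mono) auto
          also have "\<dots> \<le> \<bar>Cd d\<bar> * exp (- 4 * pi * y)" using tD[OF d y] by (intro mult_left_mono) auto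
          finally show ?thesis using tpos[of d y] by simp
        qed
        finally show "norm (\<kappa> d * eval_fps (dec d T) (complex_of_real (t d y))) \<le> norm (\<kappa> d) * (\<bar>Cd d\<bar> * exp (- 4 * pi * y))"
          unfolding norm_mult by (rule mult_left_mono) simp
      qed
    qed
    also have "\<dots> = C * exp (- 4 * pi * y)"
      by (simp add: C_def algebra_simps sum_distrib_right)
    finally show "norm ((\<Sum>d\<in>{d. d dvd n}. (of_nat n powi (K - 1) * of_nat d powi (- K) *
         (complex_of_real (real d ^ 2 / real n)) ^ e * of_nat d) *
       eval_fps (dec d T) (qq (of_nat n * (\<i> * complex_of_real y) / of_nat d)))
       - of_nat n ^ e * fps_nth T n * complex_of_real (exp (- 2 * pi * y))) \<le> C * exp (- 4 * pi * y)"
      by (simp add: \<kappa>_def)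
  qed
qed

lemma qq_imag1: "qq (\<i> * complex_of_real y) = complex_of_real (exp (- 2 * pi * y))"
  using qq_imag[of 1 y 1] by simp

lemma uniform_const:
  fixes b :: "real \<Rightarrow> real"
  assumes "finite I" "\<forall>i\<in>I. \<exists>C. \<forall>y\<ge>1. norm (E i y) \<le> C * b y" "\<And>y. b y \<ge> (0::real)"
  shows "\<exists>C. \<forall>i\<in>I. \<forall>y\<ge>1. norm (E i y) \<le> C * b y"
proof -
  from assms(2) obtain Cf where Cf: "\<And>i y. i \<in> I \<Longrightarrow> y \<ge> 1 \<Longrightarrow> norm (E i y) \<le> Cf i * b y"
    by metis
  show ?thesis
  proof (rule exI[of _ "\<Sum>i\<in>I. \<bar>Cf i\<bar>"], intro ballI allI impI)
    fix i y assume i: "i \<in> I" and y: "(y::real) \<ge> 1"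
    have "Cf i \<le> (\<Sum>i\<in>I. \<bar>Cf i\<bar>)"
      using member_le_sum[OF i, of "\<lambda>i. \<bar>Cf i\<bar>"] assms(1) by (meson abs_ge_self abs_ge_zero order_trans)
    hence "Cf i * b y \<le> (\<Sum>i\<in>I. \<bar>Cf i\<bar>) * b y" using assms(3) by (intro mult_right_mono) auto
    thus "norm (E i y) \<le> (\<Sum>i\<in>I. \<bar>Cf i\<bar>) * b y" using Cf[OF i y] by linarith
  qed
qed

lemma FINAL:
  assumes GF: "GF I e S P" and EF: "eigenform K P"
  shows False
proof -
  have I: "finite I" and R: "\<And>i. i \<in> I \<Longrightarrow> 1 \<le> fps_conv_radius (S i)"
    and Z0: "\<And>i. i \<in> I \<Longrightarrow> fps_nth (S i) 0 = 0" and Z1: "\<And>i. i \<in> I \<Longrightarrow> fps_nth (S i) 1 = 0"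
    and PE: "\<And>w. w \<in> upper_half \<Longrightarrow> P w = (\<Sum>i\<in>I. (complex_of_real (1 / Im w)) ^ (e i) * eval_fps (S i) (qq w))"
    using GF unfolding GF_def by auto
  from EF obtain z0 where z0: "z0 \<in> upper_half" "P z0 \<noteq> 0"
    and EV: "\<And>n. n \<ge> 1 \<Longrightarrow> \<exists>c. \<forall>z\<in>upper_half. hecke K n P z = c * P z"
    unfolding eigenform_def by blast
  have coef: "(\<Sum>i\<in>{i\<in>I. e i = j}. fps_nth (S i) n) = 0" for j n
  proof (cases "n = 0")
    case True thus ?thesis using Z0 by simp
  next
    case False
    hence n: "n \<ge> 1" by simp
    obtain c where c: "\<And>z. z \<in> upper_half \<Longrightarrow> hecke K n P z = c * P z" using EV[OF n] by blast
    define h where "h i y = (\<Sum>d\<in>{d. d dvd n}. (of_nat n powi (K - 1) * of_nat d powi (- K) *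
         (complex_of_real (real d ^ 2 / real n)) ^ e i * of_nat d) *
       eval_fps (dec d (S i)) (qq (of_nat n * (\<i> * complex_of_real y) / of_nat d)))" for i y
    define \<alpha> where "\<alpha> i = of_nat n ^ e i * fps_nth (S i) n" for i
    define E where "E i y = (h i y - \<alpha> i * complex_of_real (exp (- 2 * pi * y)))
        - c * eval_fps (S i) (complex_of_real (exp (- 2 * pi * y)))" for i y
    have small: "exp (- 2 * pi * y) \<le> 1 / 2" if y: "y \<ge> 1" for y
    proof -
      have "1 \<le> 2 * pi * y" using y pi_gt3 mult_mono[of 1 "2 * pi" 1 y] by simp
      hence "exp (- 2 * pi * y) \<le> exp (- 1)" by simp
      also have "exp (-1::real) \<le> 1 / 2"
        using exp_ge_add_one_self[of "1::real"] by (simp add: exp_minus field_simps)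
      finally show ?thesis .
    qed
    have EB1: "\<forall>i\<in>I. \<exists>C. \<forall>y\<ge>1. norm (E i y) \<le> C * exp (- 4 * pi * y)"
    proof
      fix i assume i: "i \<in> I"
      obtain C1 where C1: "\<And>y. y \<ge> 1 \<Longrightarrow> norm (h i y - \<alpha> i * complex_of_real (exp (- 2 * pi * y))) \<le> C1 * exp (- 4 * pi * y)"
        using ASYM[OF R[OF i] Z0[OF i] n, of K "e i"] unfolding h_def \<alpha>_def by blast
      obtain C2 where C2: "\<And>w. norm w \<le> 1/2 \<Longrightarrow> norm (eval_fps (S i) w - fps_nth (S i) 0 - fps_nth (S i) 1 * w) \<le> C2 * norm w ^ 2"
        using EST[OF R[OF i]] by blast
      show "\<exists>C. \<forall>y\<ge>1. norm (E i y) \<le> C * exp (- 4 * pi * y)"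
      proof (rule exI[of _ "C1 + norm c * \<bar>C2\<bar>"], intro allI impI)
        fix y :: real assume y: "y \<ge> 1"
        have ev: "norm (eval_fps (S i) (complex_of_real (exp (- 2 * pi * y)))) \<le> \<bar>C2\<bar> * exp (- 4 * pi * y)"
        proof -
          have "norm (eval_fps (S i) (complex_of_real (exp (- 2 * pi * y)))) \<le> C2 * norm (complex_of_real (exp (- 2 * pi * y))) ^ 2"
            using C2[of "complex_of_real (exp (- 2 * pi * y))"] small[OF y] Z0[OF i] Z1[OF i] by simp
          also have "norm (complex_of_real (exp (- 2 * pi * y))) ^ 2 = exp (- 4 * pi * y)"
            by (simp add: power2_eq_square exp_add[symmetric])
          also have "C2 * exp (- 4 * pi * y) \<le> \<bar>C2\<bar> * exp (- 4 * pi * y)" by (intro mult_right_mono) auto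
          finally show ?thesis .
        qed
        have "norm (E i y) \<le> norm (h i y - \<alpha> i * complex_of_real (exp (- 2 * pi * y)))
              + norm c * norm (eval_fps (S i) (complex_of_real (exp (- 2 * pi * y))))"
          unfolding E_def by (metis norm_mult norm_triangle_ineq4)
        also have "\<dots> \<le> C1 * exp (- 4 * pi * y) + norm c * (\<bar>C2\<bar> * exp (- 4 * pi * y))"
          by (intro add_mono C1 y mult_left_mono ev) auto
        finally show "norm (E i y) \<le> (C1 + norm c * \<bar>C2\<bar>) * exp (- 4 * pi * y)" by (simp add: algebra_simps)
      qed
    qed
    obtain C where C: "\<And>i y. i \<in> I \<Longrightarrow> y \<ge> 1 \<Longrightarrow> norm (E i y) \<le> C * exp (- 4 * pi * y)"
      using uniform_const[OF I EB1] by auto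
    have EQ: "(\<Sum>i\<in>I. (complex_of_real (1 / y)) ^ (e i) *
                 (\<alpha> i * complex_of_real (exp (- 2 * pi * y)) + E i y)) = 0" if y: "y \<ge> 1" for y
    proof -
      define z where "z = \<i> * complex_of_real y"
      have zH: "z \<in> upper_half" using y by (simp add: z_def upper_half_def)
      have imz: "Im z = y" by (simp add: z_def)
      have "hecke K n P z = (\<Sum>i\<in>I. (complex_of_real (1 / y)) ^ e i * h i y)"
        using hecke_GF[OF GF n zH, of K] by (simp add: imz h_def z_def)
      moreover have "c * P z = (\<Sum>i\<in>I. (complex_of_real (1 / y)) ^ e i * (c * eval_fps (S i) (complex_of_real (exp (- 2 * pi * y)))))"
        using PE[OF zH] by (simp add: imz z_def qq_imag1 sum_distrib_left mult_ac)
      ultimately have "(\<Sum>i\<in>I. (complex_of_real (1 / y)) ^ e i * h i y) -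
          (\<Sum>i\<in>I. (complex_of_real (1 / y)) ^ e i * (c * eval_fps (S i) (complex_of_real (exp (- 2 * pi * y))))) = 0"
        using c[OF zH] by simp
      thus ?thesis by (simp add: E_def sum_subtractf[symmetric] algebra_simps)
    qed
    have "(\<Sum>i\<in>{i\<in>I. e i = j}. \<alpha> i) = 0"
      by (rule UNI[OF I EQ C]) auto
    moreover have "(\<Sum>i\<in>{i\<in>I. e i = j}. \<alpha> i) = of_nat n ^ j * (\<Sum>i\<in>{i\<in>I. e i = j}. fps_nth (S i) n)"
      by (simp add: \<alpha>_def sum_distrib_left)
    ultimately show ?thesis using n by simp
  qed
  have "P z0 = 0"
  proof -
    define q where "q = qq z0"
    define c where "c = complex_of_real (1 / Im z0)"
    have "P z0 = (\<Sum>i\<in>I. c ^ e i * eval_fps (S i) q)" using PE[OF z0(1)] by (simp add: c_def q_def)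
    also have "\<dots> = (\<Sum>j\<in>e ` I. \<Sum>i\<in>{i\<in>I. e i = j}. c ^ e i * eval_fps (S i) q)"
      by (rule sum.image_gen[OF I])
    also have "\<dots> = (\<Sum>j\<in>e ` I. c ^ j * (\<Sum>i\<in>{i\<in>I. e i = j}. eval_fps (S i) q))"
      by (auto simp: sum_distrib_left intro!: sum.cong)
    also have "\<dots> = 0"
    proof (rule sum.neutral, rule ballI)
      fix j assume "j \<in> e ` I"
      have "(\<Sum>i\<in>{i\<in>I. e i = j}. eval_fps (S i) q) = (\<Sum>m. \<Sum>i\<in>{i\<in>I. e i = j}. fps_nth (S i) m * q ^ m)"
        unfolding eval_fps_def
        by (rule suminf_sum[symmetric]) (auto intro!: summable_fps qq_lt_radius z0(1) R simp: q_def)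
      also have "\<dots> = (\<Sum>m. (\<Sum>i\<in>{i\<in>I. e i = j}. fps_nth (S i) m) * q ^ m)"
        by (simp add: sum_distrib_right)
      also have "\<dots> = 0" by (simp add: coef)
      finally show "c ^ j * (\<Sum>i\<in>{i\<in>I. e i = j}. eval_fps (S i) q) = 0" by simp
    qed
    finally show ?thesis .
  qed
  with z0(2) show False by simp
qed

theorem mainTheorem9:
  fixes f g :: "complex \<Rightarrow> complex" and k l :: int and r s :: nat
  assumes "even k" and "even l"
    and "cusp_form k f" and "cusp_form l g"
    and "\<exists>z\<in>upper_half. f z \<noteq> 0" and "\<exists>z\<in>upper_half. g z \<noteq> 0"
    and "eigenform (k + 2 * int r) (maass_shimura_iter k r f)"
    and "eigenform (l + 2 * int s) (maass_shimura_iter l s g)"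
  shows "\<not> eigenform (k + l + 2 * int r + 2 * int s)
           (\<lambda>z. maass_shimura_iter k r f z * maass_shimura_iter l s g z)"
proof
  assume EF: "eigenform (k + l + 2 * int r + 2 * int s)
           (\<lambda>z. maass_shimura_iter k r f z * maass_shimura_iter l s g z)"
  have "NH (maass_shimura_iter k r f)" by (rule NH_iter[OF cusp_NH[OF assms(3)]])
  moreover have "NH (maass_shimura_iter l s g)" by (rule NH_iter[OF cusp_NH[OF assms(4)]])
  ultimately obtain I :: "(nat \<times> nat) set" and e S where
    "GF I e S (\<lambda>z. maass_shimura_iter k r f z * maass_shimura_iter l s g z)"
    using NH_prod by blast
  from FINAL[OF this EF] show False .
qed

end
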